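(* Let $q$ be a prime power, $m\ge 2$ an integer, $n=q^m-1$, and $\delta$ an integer with $2\le\delta\le n$. The primitive, narrow-sense BCH code $\mathcal{BCH}(n,q;\delta)$ over $\mathbf{F}_q$ contains its Euclidean dual code if and only if $$\delta\le \delta_{\max}=q^{\lceil m/2\rceil}-1-(q-2)[m\text{ odd}].$$
   Context: Let $\alpha$ be a primitive element of $\mathbf{F}_{q^m}$ and $n=q^m-1$. For an integer $x$, the $q$-ary cyclotomic coset of $x$ modulo $n$ is $C_x=\{xq^k \bmod n \mid 0\le k<m\}$. For $2\le\delta\le n$, the primitive, narrow-sense BCH code $\mathcal{BCH}(n,q;\delta)$ of designed distance $\delta$ is the cyclic code of length $n$ over $\mathbf{F}_q$ with generator polynomial $g(x)=\prod_{z\in Z}(x-\alpha^z)$, where $Z=C_1\cup\cdots\cup C_{\delta-1}$ is its defining set. The Euclidean dual of $C\subseteq\mathbf{F}_q^n$ is $C^\perp=\{y\in\mathbf{F}_q^n\mid x\cdot y=0\ \forall x\in C\}$. Iverson notation: $[P]=1$ if $P$ holds and $0$ otherwise. *)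

theory Defs
  imports "HOL-Computational_Algebra.Polynomial" "HOL-Computational_Algebra.Primes"
begin

definition prime_power :: "nat \<Rightarrow> bool" where
  "prime_power q \<longleftrightarrow> (\<exists>p k. prime p \<and> k > 0 \<and> q = p ^ k)"

definition iverson :: "bool \<Rightarrow> nat" where
  "iverson P = (if P then 1 else 0)"

definition primitive_elem :: "'b::{field,finite} \<Rightarrow> bool" where
  "primitive_elem a \<longleftrightarrow> a \<noteq> 0 \<and> (\<forall>x. x \<noteq> 0 \<longrightarrow> (\<exists>k::nat. x = a ^ k))"

text \<open>The subfield F_q of F_{q^m}: the fixed points of x |-> x^q.\<close>
definition subfield_Fq :: "nat \<Rightarrow> 'b::{field,finite} set" where
  "subfield_Fq q = {x. x ^ q = x}"

definition cyc_coset :: "nat \<Rightarrow> nat \<Rightarrow> nat \<Rightarrow> nat \<Rightarrow> nat set" where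
  "cyc_coset q m n x = {x * q ^ k mod n | k. k < m}"

definition bch_defset :: "nat \<Rightarrow> nat \<Rightarrow> nat \<Rightarrow> nat set" where
  "bch_defset q m \<delta> = (\<Union>i\<in>{1..<\<delta>}. cyc_coset q m (q ^ m - 1) i)"

definition bch_gen_poly :: "'b::{field,finite} \<Rightarrow> nat \<Rightarrow> nat \<Rightarrow> nat \<Rightarrow> 'b poly" where
  "bch_gen_poly \<alpha> q m \<delta> = (\<Prod>z\<in>bch_defset q m \<delta>. [:- (\<alpha> ^ z), 1:])"

text \<open>Vectors of F_q^n, represented as functions nat => F_{q^m} with values in F_q
  on indices < n and zero elsewhere.\<close>
definition vecs :: "nat \<Rightarrow> nat \<Rightarrow> (nat \<Rightarrow> 'b::{field,finite}) set" where
  "vecs q n = {v. (\<forall>i<n. v i \<in> subfield_Fq q) \<and> (\<forall>i\<ge>n. v i = 0)}"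

definition vec_poly :: "nat \<Rightarrow> (nat \<Rightarrow> 'b::{field,finite}) \<Rightarrow> 'b poly" where
  "vec_poly n v = (\<Sum>i<n. monom (v i) i)"

definition bch_code :: "'b::{field,finite} \<Rightarrow> nat \<Rightarrow> nat \<Rightarrow> nat \<Rightarrow> (nat \<Rightarrow> 'b) set" where
  "bch_code \<alpha> q m \<delta> = {v \<in> vecs q (q ^ m - 1). bch_gen_poly \<alpha> q m \<delta> dvd vec_poly (q ^ m - 1) v}"

definition dual_code :: "nat \<Rightarrow> nat \<Rightarrow> (nat \<Rightarrow> 'b::{field,finite}) set \<Rightarrow> (nat \<Rightarrow> 'b) set" where
  "dual_code q n C = {y \<in> vecs q n. \<forall>x\<in>C. (\<Sum>i<n. x i * y i) = 0}"

end

theory Submission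
  imports Defs "HOL-Number_Theory.Cong"
begin


definition coll :: "nat \<Rightarrow> nat \<Rightarrow> nat \<Rightarrow> bool" where
  "coll q m \<delta> \<longleftrightarrow> (\<exists>x y k. 1 \<le> x \<and> x < \<delta> \<and> 1 \<le> y \<and> y < \<delta> \<and> k < m \<and> (q^m - 1) dvd (x * q^k + y))"

lemma swap_dvd:
  fixes q m x y k :: nat
  assumes "q \<ge> 1" "k \<le> m" "(q^m - 1) dvd (x * q^k + y)"
  shows "(q^m - 1) dvd (y * q^(m-k) + x)"
proof -
  have qm: "q^m = (q^m - 1) + 1" using assms(1) by simp
  have "(q^m - 1) dvd (x * q^k + y) * q^(m-k)" using assms(3) by simp
  also have "(x * q^k + y) * q^(m-k) = x * q^m + y * q^(m-k)"
    using assms(2) by (simp add: algebra_simps flip: power_add)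
  also have "\<dots> = x * (q^m - 1) + (y * q^(m-k) + x)"
    by (subst qm) (simp add: algebra_simps)
  finally show ?thesis by (simp add: dvd_add_right_iff)
qed

lemma small_not_dvd:
  fixes n s :: nat
  assumes "0 < s" "s < n"
  shows "\<not> n dvd s"
  using assms by (auto dest: dvd_imp_le)

lemma odd_id:
  fixes Q q :: nat assumes "q \<le> Q" "2 \<le> q"
  shows "(Q*q - q + 1) * Q + (Q*q - Q - 1) = Q*Q*q - 1"
proof -
  have b: "Q * 2 \<le> Q*q" using assms by simp
  have a1: "q \<le> Q*q" using mult_le_mono1[of 1 Q q] assms by simp
  have a2: "Q + 1 \<le> Q*q" using b assms by linarith
  have a3: "1 \<le> Q*Q*q" using assms by simp
  note a = a1 a2 a3
  have e1: "int (Q*q - q + 1) = int Q * int q - int q + 1" using a1 by (simp add: of_nat_diff)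
  have e2: "int (Q*q - Q - 1) = int Q * int q - int Q - 1" using a2 by (simp add: of_nat_diff)
  have e3: "int (Q*Q*q - 1) = int Q * int Q * int q - 1" using a3 by (simp add: of_nat_diff)
  have "int ((Q*q - q + 1) * Q + (Q*q - Q - 1)) = int (Q*q - q + 1) * int Q + int (Q*q - Q - 1)" by (simp only: of_nat_add of_nat_mult)
  also have "\<dots> = (int Q * int q - int q + 1) * int Q + (int Q * int q - int Q - 1)" using e1 e2 by simp
  also have "\<dots> = int Q * int Q * int q - 1" by (simp add: algebra_simps)
  also have "\<dots> = int (Q*Q*q - 1)" using e3 by simp
  finally have "int ((Q*q - q + 1) * Q + (Q*q - Q - 1)) = int (Q*Q*q - 1)" .
  thus ?thesis by (simp only: of_nat_eq_iff)
qed

lemma nt_main: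
  fixes q m \<delta> :: nat
  assumes q2: "q \<ge> 2" and m2: "m \<ge> 2" and d2: "2 \<le> \<delta>"
  shows "\<not> coll q m \<delta> \<longleftrightarrow> \<delta> \<le> q ^ ((m + 1) div 2) - 1 - (q - 2) * iverson (odd m)"
proof -
  define t where "t = m div 2"
  have t1: "t \<ge> 1" using m2 by (simp add: t_def)
  have qtq0: "q^t \<ge> q" using power_increasing[of 1 t q] q2 t1 by simp
  have qt2: "q^t \<ge> 2" using qtq0 q2 by linarith
  have qtq: "q^t \<ge> q" using power_increasing[of 1 t q] q2 t1 by simp
  show ?thesis
  proof (cases "even m")
    case True
    then have m: "m = 2*t" by (simp add: t_def)
    have dm: "q ^ ((m + 1) div 2) - 1 - (q - 2) * iverson (odd m) = q^t - 1"
      using True m by (simp add: iverson_def)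
    have qm: "q^m = q^t * q^t" by (simp add: m mult_2 power_add)
    show ?thesis unfolding dm
    proof
      assume nc: "\<not> coll q m \<delta>"
      show "\<delta> \<le> q^t - 1"
      proof (rule ccontr)
        assume "\<not> \<delta> \<le> q^t - 1"
        hence "q^t - 1 < \<delta>" by simp
        moreover have "(q^m - 1) dvd ((q^t - 1) * q^t + (q^t - 1))"
        proof -
          have "(q^t - 1) * q^t + (q^t - 1) = q^m - 1" using qt2 qm
            by (simp add: algebra_simps diff_mult_distrib)
          thus ?thesis by simp
        qed
        moreover have "t < m" using m t1 by simp
        ultimately have "coll q m \<delta>" unfolding coll_def using qt2
          by (intro exI[of _ "q^t - 1"] exI[of _ t]) auto
        with nc show False by simp
      qed
    next
      assume dl: "\<delta> \<le> q^t - 1"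
      have key: "\<not> (q^m - 1) dvd (x * q^j + y)" if "1 \<le> x" "x < \<delta>" "1 \<le> y" "y < \<delta>" "j \<le> t" for x y j
      proof (rule small_not_dvd)
        show "0 < x * q^j + y" using that by simp
        have "x * q^j \<le> (q^t - 2) * q^t"
          using that dl q2 by (intro mult_mono power_increasing) auto
        hence "x * q^j + y \<le> (q^t - 2) * q^t + (q^t - 2)" using that dl by linarith
        also have "\<dots> < q^m - 1"
        proof -
          have "q^t * q^t \<ge> 2 * q^t" using qt2 by simp
          thus ?thesis using qt2 qm by (simp add: algebra_simps diff_mult_distrib; linarith)
        qed
        finally show "x * q^j + y < q^m - 1" .
      qed
      show "\<not> coll q m \<delta>"
      proof
        assume "coll q m \<delta>"
        then obtain x y k where h: "1 \<le> x" "x < \<delta>" "1 \<le> y" "y < \<delta>" "k < m" "(q^m - 1) dvd (x * q^k + y)"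
          unfolding coll_def by blast
        show False
        proof (cases "k \<le> t")
          case True thus False using key h by blast
        next
          case False
          have "(q^m - 1) dvd (y * q^(m-k) + x)" using swap_dvd h q2 by simp
          moreover have "m - k \<le> t" using False m by simp
          ultimately show False using key h by blast
        qed
      qed
    qed
  next
    case False
    then have m: "m = 2*t + 1" by (simp add: t_def)
    have dm: "q ^ ((m + 1) div 2) - 1 - (q - 2) * iverson (odd m) = q^(t+1) - q + 1"
    proof -
      have h: "(m+1) div 2 = t + 1" using m by simp
      have X: "q^(t+1) \<ge> q * 2" using qt2 by simp
      have i: "iverson (odd m) = 1" using False by (simp add: iverson_def)
      show ?thesis unfolding h i mult_1_right using X q2 by arith
    qed
    have qm: "q^m = q^t * q^t * q" by (simp add: m mult_2 power_add)
    have qt1: "q^(t+1) = q^t * q" by simp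
    show ?thesis unfolding dm
    proof
      assume nc: "\<not> coll q m \<delta>"
      show "\<delta> \<le> q^(t+1) - q + 1"
      proof (rule ccontr)
        assume "\<not> \<delta> \<le> q^(t+1) - q + 1"
        hence "q^(t+1) - q + 1 < \<delta>" by simp
        moreover have "q^(t+1) - q^t - 1 \<le> q^(t+1) - q + 1" using qtq by simp
        moreover have "q^(t+1) - q^t - 1 \<ge> 1"
        proof -
          have "q^t * q \<ge> q^t * 2" using q2 by simp
          thus ?thesis using qt2 qt1 by linarith
        qed
        moreover have "(q^m - 1) dvd ((q^(t+1) - q + 1) * q^t + (q^(t+1) - q^t - 1))"
        proof -
          have a: "q^t * q \<ge> q^t * 2" using q2 by simp
          have "(q^(t+1) - q + 1) * q^t + (q^(t+1) - q^t - 1) = q^m - 1"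
            unfolding qt1 qm using odd_id[OF qtq q2] by simp
          thus ?thesis by simp
        qed
        moreover have "t < m" using m t1 by simp
        ultimately have "coll q m \<delta>" unfolding coll_def using qt2
          by (intro exI[of _ "q^(t+1) - q + 1"] exI[of _ "q^(t+1) - q^t - 1"] exI[of _ t]) auto
        with nc show False by simp
      qed
    next
      assume dl: "\<delta> \<le> q^(t+1) - q + 1"
      have key: "\<not> (q^m - 1) dvd (x * q^j + y)" if "1 \<le> x" "x < \<delta>" "1 \<le> y" "y < \<delta>" "j \<le> t" for x y j
      proof (rule small_not_dvd)
        show "0 < x * q^j + y" using that by simp
        have "x * q^j \<le> (q^(t+1) - q) * q^t"
          using that dl q2 by (intro mult_mono power_increasing) auto
        hence "x * q^j + y \<le> (q^(t+1) - q) * q^t + (q^(t+1) - q)" using that dl by linarith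
        also have "\<dots> = q^m - q"
        proof -
          have "(q^(t+1) - q) * q^t = q^m - q * q^t" using qm qt1 by (simp add: diff_mult_distrib algebra_simps)
          moreover have "q * q^t \<le> q^m" using qm qt2 by simp
          ultimately show ?thesis using qt1 qtq by (simp add: algebra_simps)
        qed
        also have "\<dots> < q^m - 1"
        proof -
          have "q \<le> q^m" using power_increasing[of 1 m q] q2 m by simp
          thus ?thesis using q2 by linarith
        qed
        finally show "x * q^j + y < q^m - 1" .
      qed
      show "\<not> coll q m \<delta>"
      proof
        assume "coll q m \<delta>"
        then obtain x y k where h: "1 \<le> x" "x < \<delta>" "1 \<le> y" "y < \<delta>" "k < m" "(q^m - 1) dvd (x * q^k + y)"
          unfolding coll_def by blast
        show False
        proof (cases "k \<le> t")
          case True thus False using key h by blast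
        next
          case False
          have "(q^m - 1) dvd (y * q^(m-k) + x)" using swap_dvd h q2 by simp
          moreover have "m - k \<le> t" using False m by simp
          ultimately show False using key h by blast
        qed
      qed
    qed
  qed
qed



lemma qcong:
  fixes q m e :: nat assumes "q \<ge> 1"
  shows "[q^e = q^(e mod m)] (mod (q^m - 1))"
proof -
  have c0: "[(q^m - 1) + 1 = 1] (mod (q^m - 1))" by (simp only: cong_def mod_add_self1)
  have "q^m - 1 + 1 = q^m" using assms by simp
  hence c1: "[q^m = 1] (mod (q^m - 1))" using c0 by (simp only:)
  have "q^e = q^(m*(e div m) + e mod m)" by simp
  also have "\<dots> = (q^m)^(e div m) * q^(e mod m)" by (simp only: power_add power_mult)
  finally have "q^e = (q^m)^(e div m) * q^(e mod m)" .
  moreover have "[(q^m)^(e div m) * q^(e mod m) = 1^(e div m) * q^(e mod m)] (mod (q^m - 1))"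
    by (intro cong_mult cong_pow c1 cong_refl)
  ultimately show ?thesis by simp
qed

lemma defset_mem:
  "z \<in> bch_defset q m \<delta> \<longleftrightarrow> (\<exists>x k. 1 \<le> x \<and> x < \<delta> \<and> k < m \<and> z = x * q^k mod (q^m - 1))"
  unfolding bch_defset_def cyc_coset_def by auto

lemma defset_sub:
  assumes "q \<ge> 2" "m \<ge> 1"
  shows "bch_defset q m \<delta> \<subseteq> {..<q^m - 1}"
proof -
  have "q^m \<ge> q" using power_increasing[of 1 m q] assms by simp
  hence "q^m - 1 > 0" using assms by linarith
  thus ?thesis by (auto simp: defset_mem)
qed

lemma defset_closed:
  assumes "q \<ge> 2" "z \<in> bch_defset q m \<delta>"
  shows "z * q^j mod (q^m - 1) \<in> bch_defset q m \<delta>"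
proof -
  obtain x k where h: "1 \<le> x" "x < \<delta>" "k < m" "z = x * q^k mod (q^m - 1)"
    using assms(2) by (auto simp: defset_mem)
  have "m > 0" using h by simp
  let ?n = "q^m - 1"
  have c: "q^(k+j) mod ?n = q^((k+j) mod m) mod ?n"
    using qcong[of q "k+j" m] assms(1) unfolding cong_def by simp
  have "z * q^j mod ?n = (x * q^k mod ?n) * q^j mod ?n" using h(4) by simp
  also have "\<dots> = x * q^k * q^j mod ?n" by (simp add: mod_mult_left_eq)
  also have "\<dots> = x * q^(k+j) mod ?n" by (simp add: power_add mult.assoc)
  also have "\<dots> = x * (q^(k+j) mod ?n) mod ?n" by (simp add: mod_mult_right_eq)
  also have "\<dots> = x * (q^((k+j) mod m) mod ?n) mod ?n" using c by simp
  also have "\<dots> = x * q^((k+j) mod m) mod ?n" by (simp add: mod_mult_right_eq)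
  finally have e: "z * q^j mod ?n = x * q^((k+j) mod m) mod ?n" .
  have "(k+j) mod m < m" using \<open>m > 0\<close> by simp
  thus ?thesis unfolding defset_mem
    by (intro exI[of _ x] exI[of _ "(k+j) mod m"]) (use h e in simp)
qed

lemma bad_iff_coll:
  assumes "q \<ge> 2" "m \<ge> 1" "\<delta> \<le> q^m - 1"
  shows "(\<exists>z\<in>bch_defset q m \<delta>. \<exists>s\<in>bch_defset q m \<delta>. (q^m - 1) dvd (z + s)) \<longleftrightarrow> coll q m \<delta>"
proof
  assume "\<exists>z\<in>bch_defset q m \<delta>. \<exists>s\<in>bch_defset q m \<delta>. (q^m - 1) dvd (z + s)"
  then obtain z s where zs: "z \<in> bch_defset q m \<delta>" "s \<in> bch_defset q m \<delta>" "(q^m - 1) dvd (z + s)"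
    by blast
  from zs(1) obtain x a where hx: "1 \<le> x" "x < \<delta>" "a < m" "z = x * q^a mod (q^m - 1)"
    unfolding defset_mem by blast
  from zs(2) obtain y b where hy: "1 \<le> y" "y < \<delta>" "b < m" "s = y * q^b mod (q^m - 1)"
    unfolding defset_mem by blast
  have h7: "(q^m - 1) dvd (x * q^a mod (q^m - 1) + y * q^b mod (q^m - 1))"
    using zs(3) hx(4) hy(4) by simp
  note h = hx(1,2,3) hy(1,2,3) h7
  let ?n = "q^m - 1"
  have "[x * q^a mod ?n + y * q^b mod ?n = x * q^a + y * q^b] (mod ?n)"
    unfolding cong_def by (simp add: mod_add_eq)
  hence "?n dvd (x * q^a mod ?n + y * q^b mod ?n) \<longleftrightarrow> ?n dvd (x * q^a + y * q^b)" by (rule cong_dvd_iff)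
  hence d1: "?n dvd (x * q^a + y * q^b)" using h(7) by (rule iffD1)
  hence d2: "?n dvd (x * q^a + y * q^b) * q^(m-b)" by simp
  have e: "(x * q^a + y * q^b) * q^(m-b) = x * q^(a + (m - b)) + y * q^m"
    using h(6) by (simp add: algebra_simps flip: power_add)
  have "[x * q^(a + (m - b)) + y * q^m = x * q^((a + (m - b)) mod m) + y * q^(m mod m)] (mod ?n)"
  proof -
    have c1: "[q^(a + (m - b)) = q^((a + (m - b)) mod m)] (mod ?n)" by (rule qcong) (use assms(1) in simp)
    have c2: "[q^m = q^(m mod m)] (mod ?n)" by (rule qcong) (use assms(1) in simp)
    show ?thesis by (rule cong_add[OF cong_mult[OF cong_refl c1] cong_mult[OF cong_refl c2]])
  qed
  hence "?n dvd (x * q^(a + (m - b)) + y * q^m) \<longleftrightarrow> ?n dvd (x * q^((a + (m - b)) mod m) + y * q^(m mod m))" by (rule cong_dvd_iff)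
  hence "?n dvd (x * q^((a + (m - b)) mod m) + y * q^(m mod m))" using d2 e by simp
  hence "?n dvd (x * q^((a + (m - b)) mod m) + y)" by simp
  moreover have "(a + (m - b)) mod m < m" using h by simp
  ultimately show "coll q m \<delta>" unfolding coll_def using h(1,2,4,5)
    by (intro exI[of _ x] exI[of _ y] exI[of _ "(a + (m - b)) mod m"]) simp
next
  assume "coll q m \<delta>"
  then obtain x y k where h: "1 \<le> x" "x < \<delta>" "1 \<le> y" "y < \<delta>" "k < m" "(q^m - 1) dvd (x * q^k + y)"
    unfolding coll_def by blast
  let ?n = "q^m - 1"
  have z: "x * q^k mod ?n \<in> bch_defset q m \<delta>" unfolding defset_mem
    by (intro exI[of _ x] exI[of _ k]) (use h(1,2,5) in simp)
  have ymod: "y * q^0 mod ?n = y" using h(4) assms(3) by simp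
  have s: "y \<in> bch_defset q m \<delta>" unfolding defset_mem using h(3,4) assms(2) ymod
    by (intro exI[of _ y] exI[of _ 0]) simp
  have "[x * q^k mod ?n + y = x * q^k + y] (mod ?n)"
    unfolding cong_def by (simp add: mod_add_left_eq)
  hence "?n dvd (x * q^k mod ?n + y) \<longleftrightarrow> ?n dvd (x * q^k + y)" by (rule cong_dvd_iff)
  hence dv: "?n dvd (x * q^k mod ?n + y)" using h(6) by (rule iffD2)
  show "\<exists>z\<in>bch_defset q m \<delta>. \<exists>s\<in>bch_defset q m \<delta>. ?n dvd (z + s)"
  proof (rule bexI[OF _ z])
    show "\<exists>s\<in>bch_defset q m \<delta>. ?n dvd (x * q^k mod ?n + s)"
      by (rule bexI[where P = "\<lambda>s. ?n dvd (x * q^k mod ?n + s)", OF dv s])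
  qed
qed



lemma pow_card_field:
  fixes x :: "'b::{field,finite}"
  shows "x ^ card (UNIV :: 'b set) = x"
proof (cases "x = 0")
  case False
  have "x * (\<Prod>y\<in>UNIV-{0}. x * y) = x * x ^ (card (UNIV :: 'b set) - 1) * \<Prod>(UNIV-{0})"
    by (simp add: prod.distrib mult_ac)
  also have "x * x ^ (card (UNIV :: 'b set) - 1) = x ^ Suc (card (UNIV :: 'b set) - 1)"
    by (subst power_Suc) auto
  also have "Suc (card (UNIV :: 'b set) - 1) = card (UNIV :: 'b set)"
    using finite_UNIV_card_ge_0[where ?'a = 'b] by simp
  also have "(\<Prod>y\<in>UNIV-{0}. x * y) = (\<Prod>y\<in>UNIV-{0}. y)"
    by (rule prod.reindex_bij_witness[of _ "\<lambda>y. y / x" "\<lambda>y. x * y"]) (use False in auto)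
  finally show ?thesis
    by simp
qed (use finite_UNIV_card_ge_0[where ?'a = 'b] in auto)

locale bchf =
  fixes \<alpha> :: "'b::{field,finite}" and q m :: nat
  assumes pp: "prime_power q" and m1: "1 \<le> m" and cardq: "card (UNIV :: 'b set) = q ^ m"
    and prim: "primitive_elem \<alpha>"
begin

lemma char_facts: "prime CHAR('b) \<and> (\<exists>e. e > 0 \<and> q = CHAR('b) ^ e)"
proof -
  obtain p k where pk: "prime p" "k > 0" "q = p ^ k" using pp unfolding prime_power_def by blast
  have cpos: "CHAR('b) > 0" by (rule finite_imp_CHAR_pos) simp
  have cp: "prime CHAR('b)" by (rule prime_CHAR_semidom[OF cpos])
  have "(\<Sum>x\<in>(UNIV::'b set). x + 1) = (\<Sum>x\<in>UNIV. x)"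
    by (rule sum.reindex_bij_witness[of _ "\<lambda>y. y - 1" "\<lambda>y. y + 1"]) auto
  hence "of_nat (card (UNIV :: 'b set)) = (0::'b)" by (simp add: sum.distrib)
  hence "CHAR('b) dvd card (UNIV :: 'b set)" by (simp add: of_nat_eq_0_iff_char_dvd)
  hence "CHAR('b) dvd p ^ (k * m)" using cardq pk by (simp add: power_mult)
  hence "CHAR('b) dvd p" using cp prime_dvd_power by blast
  hence "CHAR('b) = p" using cp pk(1) primes_dvd_imp_eq by blast
  thus ?thesis using cp pk by blast
qed

lemma q2: "q \<ge> 2"
proof -
  obtain p k where pk: "prime p" "k > 0" "q = p ^ k" using pp unfolding prime_power_def by blast
  have "p \<ge> 2" using pk(1) by (simp add: prime_ge_2_nat)
  moreover have "p ^ k \<ge> p ^ 1" using pk(2) \<open>p \<ge> 2\<close> by (intro power_increasing) auto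
  ultimately show ?thesis using pk by simp
qed

lemma frob_sum: "(sum f A) ^ (q ^ j) = sum (\<lambda>i. f i ^ (q ^ j)) (A :: 'c set)"
  for f :: "'c \<Rightarrow> 'b"
proof -
  obtain e where e: "q = CHAR('b) ^ e" and cp: "prime CHAR('b)" using char_facts by blast
  have "q ^ j = CHAR('b) ^ (e * j)" by (simp add: e power_mult)
  thus ?thesis by (rule freshmans_dream_sum'[OF cp])
qed

lemma ofn0: "of_nat (q ^ m) = (0 :: 'b)"
proof -
  obtain e where e: "e > 0" "q = CHAR('b) ^ e" using char_facts by blast
  have "q ^ m = CHAR('b) ^ (e * m)" using e by (simp add: power_mult)
  moreover have "e * m > 0" using e m1 by simp
  ultimately have "CHAR('b) dvd q ^ m" by simp
  thus ?thesis by (simp only: of_nat_eq_0_iff_char_dvd)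
qed

lemma qm_ge: "q ^ m \<ge> q" using power_increasing[of 1 m q] q2 m1 by simp

lemma ofn: "of_nat (q ^ m - 1) = (-1 :: 'b)"
proof -
  have "q ^ m \<ge> 1" using qm_ge q2 by linarith
  hence "of_nat (q ^ m - 1) = (of_nat (q ^ m) :: 'b) - 1" by (simp add: of_nat_diff)
  thus ?thesis using ofn0 by simp
qed

lemma pow_qm: "x ^ (q ^ m) = (x :: 'b)"
  using pow_card_field[of x] cardq by simp

lemma alpha_nz: "\<alpha> \<noteq> 0" using prim unfolding primitive_elem_def by simp

lemma alpha_n: "\<alpha> ^ (q ^ m - 1) = 1"
proof -
  have "q ^ m = Suc (q ^ m - 1)" using qm_ge q2 by simp
  hence "\<alpha> * \<alpha> ^ (q ^ m - 1) = \<alpha> * 1" using pow_qm[of \<alpha>] by (metis power_Suc mult_1_right)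
  thus ?thesis using alpha_nz by simp
qed

lemma alpha_pow_n_mult: "\<alpha> ^ ((q ^ m - 1) * j) = 1"
  unfolding power_mult alpha_n by simp

lemma alpha_one_iff: "\<alpha> ^ e = 1 \<longleftrightarrow> (q ^ m - 1) dvd e"
proof
  assume "(q ^ m - 1) dvd e"
  then obtain j where "e = (q ^ m - 1) * j" by blast
  thus "\<alpha> ^ e = 1" using alpha_pow_n_mult by simp
next
  assume ae: "\<alpha> ^ e = 1"
  let ?n = "q ^ m - 1"
  show "?n dvd e"
  proof (rule ccontr)
    assume nd: "\<not> ?n dvd e"
    define r where "r = e mod ?n"
    have npos: "?n > 0" using qm_ge q2 by linarith
    have r0: "r > 0" using nd npos unfolding r_def by (simp add: dvd_eq_mod_eq_0)
    have rn: "r < ?n" using npos unfolding r_def by simp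
    have "\<alpha> ^ e = \<alpha> ^ (?n * (e div ?n)) * \<alpha> ^ r"
      unfolding r_def by (simp flip: power_add)
    hence ar: "\<alpha> ^ r = 1" using ae alpha_pow_n_mult by simp
    have pr: "\<alpha> ^ k = \<alpha> ^ (k mod r)" for k
    proof -
      have "\<alpha> ^ k = \<alpha> ^ (r * (k div r) + k mod r)" by simp
      also have "\<dots> = (\<alpha> ^ r) ^ (k div r) * \<alpha> ^ (k mod r)" by (simp only: power_add power_mult)
      finally show ?thesis using ar by simp
    qed
    have "UNIV - {0} \<subseteq> (\<lambda>k. \<alpha> ^ k) ` {..<r}"
    proof
      fix x :: 'b assume "x \<in> UNIV - {0}"
      then obtain k where "x = \<alpha> ^ k" using prim unfolding primitive_elem_def by blast
      hence "x = \<alpha> ^ (k mod r)" using pr by simp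
      moreover have "k mod r < r" using r0 by simp
      ultimately show "x \<in> (\<lambda>k. \<alpha> ^ k) ` {..<r}" by blast
    qed
    hence "card (UNIV - {0 :: 'b}) \<le> card ((\<lambda>k. \<alpha> ^ k) ` {..<r})" by (intro card_mono) auto
    also have "\<dots> \<le> r" using card_image_le[of "{..<r}" "\<lambda>k. \<alpha> ^ k"] by simp
    finally have "card (UNIV - {0 :: 'b}) \<le> r" .
    moreover have "card (UNIV - {0 :: 'b}) = ?n" using cardq by (simp add: card_Diff_singleton)
    ultimately show False using rn by simp
  qed
qed

lemma alpha_inj: "inj_on (\<lambda>z. \<alpha> ^ z) {..<q ^ m - 1}"
proof (rule inj_onI)
  fix a b assume a: "a \<in> {..<q ^ m - 1}" and b: "b \<in> {..<q ^ m - 1}" and ab: "\<alpha> ^ a = \<alpha> ^ b"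
  show "a = b"
  proof (rule ccontr)
    assume "a \<noteq> b"
    have *: "\<alpha> ^ (d - c) = 1" if "c < d" "\<alpha> ^ c = \<alpha> ^ d" for c d
    proof -
      have "\<alpha> ^ c * \<alpha> ^ (d - c) = \<alpha> ^ (c + (d - c))" by (simp only: power_add)
      also have "\<dots> = \<alpha> ^ d" using that by simp
      finally have "\<alpha> ^ d = \<alpha> ^ c * \<alpha> ^ (d - c)" by simp
      thus ?thesis using that alpha_nz by simp
    qed
    have "\<exists>c d. c < d \<and> d < q ^ m - 1 \<and> \<alpha> ^ (d - c) = 1"
    proof (cases "a < b")
      case True thus ?thesis using * ab b by blast
    next
      case False hence "b < a" using \<open>a \<noteq> b\<close> by simp
      thus ?thesis using * ab a by fastforce
    qed
    then obtain c d where cd: "c < d" "d < q ^ m - 1" "\<alpha> ^ (d - c) = 1" by blast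
    hence "(q ^ m - 1) dvd (d - c)" using alpha_one_iff by simp
    moreover have "0 < d - c" "d - c < q ^ m - 1" using cd by auto
    ultimately show False using small_not_dvd by blast
  qed
qed

lemma Gsum: "(\<Sum>i<q ^ m - 1. \<alpha> ^ (i * e)) = (if (q ^ m - 1) dvd e then of_nat (q ^ m - 1) else 0)"
proof (cases "(q ^ m - 1) dvd e")
  case True
  hence "\<alpha> ^ e = 1" using alpha_one_iff by simp
  hence "\<alpha> ^ (i * e) = 1" for i by (simp add: mult.commute power_mult)
  thus ?thesis using True by simp
next
  case False
  hence ne: "\<alpha> ^ e \<noteq> 1" using alpha_one_iff by simp
  have "(\<Sum>i<q ^ m - 1. \<alpha> ^ (i * e)) = (\<Sum>i<q ^ m - 1. (\<alpha> ^ e) ^ i)"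
    by (intro sum.cong refl) (simp only: mult.commute[of _ e] power_mult)
  also have "\<dots> = ((\<alpha> ^ e) ^ (q ^ m - 1) - 1) / (\<alpha> ^ e - 1)" by (rule geometric_sum[OF ne])
  also have "(\<alpha> ^ e) ^ (q ^ m - 1) = 1"
  proof -
    have "(\<alpha> ^ e) ^ (q ^ m - 1) = (\<alpha> ^ (q ^ m - 1)) ^ e" by (simp only: power_mult[symmetric] mult.commute)
    thus ?thesis unfolding alpha_n by simp
  qed
  finally show ?thesis using False by simp
qed

lemma Fq_pow: "v \<in> subfield_Fq q \<Longrightarrow> v ^ (q ^ j) = (v :: 'b)"
proof (induction j)
  case 0 thus ?case by simp
next
  case (Suc j)
  have "v ^ (q ^ Suc j) = (v ^ (q ^ j)) ^ q" by (simp only: power_Suc2 power_mult)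
  also have "\<dots> = v ^ q" using Suc by simp
  also have "\<dots> = v" using Suc.prems unfolding subfield_Fq_def by simp
  finally show ?case .
qed

definition Tr :: "'b \<Rightarrow> 'b" where "Tr x = (\<Sum>k<m. x ^ (q ^ k))"

lemma Tr_Fq: "Tr x ^ q = Tr x"
proof -
  have "Tr x ^ q = Tr x ^ (q ^ 1)" by simp
  also have "\<dots> = (\<Sum>k<m. (x ^ (q ^ k)) ^ (q ^ 1))" unfolding Tr_def by (rule frob_sum)
  also have "\<dots> = (\<Sum>k<m. x ^ (q ^ Suc k))" by (simp only: power_one_right power_Suc2 power_mult)
  also have "\<dots> = Tr x"
  proof -
    have "(\<Sum>k<Suc m. x ^ (q ^ k)) = x ^ (q ^ 0) + (\<Sum>k<m. x ^ (q ^ Suc k))"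
      by (rule sum.lessThan_Suc_shift)
    moreover have "(\<Sum>k<Suc m. x ^ (q ^ k)) = Tr x + x ^ (q ^ m)"
      unfolding Tr_def by simp
    ultimately show ?thesis using pow_qm[of x] by simp
  qed
  finally show ?thesis .
qed

lemma Tr_0: "Tr 0 = 0"
proof -
  show ?thesis unfolding Tr_def by (intro sum.neutral ballI) (use q2 in \<open>simp add: power_0_left\<close>)
qed

lemma exists_nonroot:
  assumes K: "K \<subseteq> {..<m}" "0 \<in> K"
  shows "\<exists>\<beta>::'b. (\<Sum>k\<in>K. \<beta> ^ (q ^ k)) \<noteq> 0"
proof (rule ccontr)
  assume "\<not> ?thesis"
  hence allz: "\<forall>\<beta>::'b. (\<Sum>k\<in>K. \<beta> ^ (q ^ k)) = 0" by simp
  define P :: "'b poly" where "P = (\<Sum>k\<in>K. Polynomial.monom 1 (q ^ k))"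
  have fK: "finite K" using K finite_subset by blast
  have evalP: "poly P x = (\<Sum>k\<in>K. x ^ (q ^ k))" for x
    unfolding P_def by (simp add: poly_sum poly_monom)
  have qk1: "q ^ k = 1 \<longleftrightarrow> k = 0" for k
  proof
    assume "q ^ k = 1"
    thus "k = 0" using power_increasing[of 1 k q] q2 by (cases k) auto
  qed simp
  have "coeff P 1 = (\<Sum>k\<in>K. if q ^ k = 1 then 1 else 0)"
    unfolding P_def by (simp add: coeff_sum coeff_monom)
  also have "\<dots> = (\<Sum>k\<in>K. if k = 0 then 1 else 0)" using qk1 by simp
  also have "\<dots> = 1" using fK K(2) by simp
  finally have "P \<noteq> 0" by auto
  have "degree P \<le> q ^ m - 1"
  proof (rule degree_le, intro allI impI)
    fix i assume i: "q ^ m - 1 < i"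
    have "q ^ k \<noteq> i" if "k \<in> K" for k
    proof -
      have "k < m" using that K by auto
      hence "q ^ k < q ^ m" using q2 by (intro power_strict_increasing) auto
      thus ?thesis using i by simp
    qed
    thus "coeff P i = 0" unfolding P_def by (simp add: coeff_sum coeff_monom)
  qed
  have c1: "card {x. poly P x = 0} \<le> degree P" by (rule card_poly_roots_bound[OF \<open>P \<noteq> 0\<close>])
  have "{x. poly P x = 0} = UNIV" using allz evalP by simp
  hence "card {x. poly P x = 0} = q ^ m" using cardq by simp
  hence "q ^ m \<le> q ^ m - 1" using c1 \<open>degree P \<le> q ^ m - 1\<close> by linarith
  thus False using qm_ge q2 by linarith
qed

lemma Tr_nonzero: "\<exists>\<gamma>. Tr \<gamma> \<noteq> 0"
  using exists_nonroot[of "{..<m}"] m1 unfolding Tr_def by auto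

lemma poly_vec: "poly (vec_poly n v) x = (\<Sum>i<n. v i * x ^ i)"
  unfolding vec_poly_def by (simp add: poly_sum poly_monom)

end



context bchf begin

definition tv :: "'b \<Rightarrow> nat \<Rightarrow> nat \<Rightarrow> 'b" where
  "tv \<beta> w = (\<lambda>i. if i < q ^ m - 1 then Tr (\<beta> * \<alpha> ^ (i * w)) else 0)"

lemma tv_vecs: "tv \<beta> w \<in> vecs q (q ^ m - 1)"
  unfolding vecs_def subfield_Fq_def tv_def using Tr_Fq by auto

lemma tvi: "i < q ^ m - 1 \<Longrightarrow> tv \<beta> w i = Tr (\<beta> * \<alpha> ^ (i * w))"
  by (simp add: tv_def)

lemma inner_tv:
  assumes "v \<in> vecs q (q ^ m - 1)"
  shows "(\<Sum>i<q ^ m - 1. v i * tv \<beta> w i) = Tr (\<beta> * poly (vec_poly (q ^ m - 1) v) (\<alpha> ^ w))"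
proof -
  let ?n = "q ^ m - 1"
  have vF: "v i \<in> subfield_Fq q" if "i < ?n" for i using assms that by (simp add: vecs_def)
  have "Tr (\<beta> * poly (vec_poly ?n v) (\<alpha> ^ w)) = (\<Sum>k<m. (\<Sum>i<?n. \<beta> * (v i * (\<alpha> ^ w) ^ i)) ^ (q ^ k))"
    unfolding Tr_def poly_vec by (simp add: sum_distrib_left)
  also have "\<dots> = (\<Sum>k<m. \<Sum>i<?n. (\<beta> * (v i * (\<alpha> ^ w) ^ i)) ^ (q ^ k))" by (simp only: frob_sum)
  also have "\<dots> = (\<Sum>k<m. \<Sum>i<?n. v i * (\<beta> * \<alpha> ^ (i * w)) ^ (q ^ k))"
  proof (intro sum.cong refl)
    fix k i assume "i \<in> {..<?n}"
    hence vi: "v i ^ (q ^ k) = v i" using vF Fq_pow by simp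
    have aw: "(\<alpha> ^ w) ^ i = \<alpha> ^ (i * w)" by (simp add: power_mult[symmetric] mult.commute)
    show "(\<beta> * (v i * (\<alpha> ^ w) ^ i)) ^ (q ^ k) = v i * (\<beta> * \<alpha> ^ (i * w)) ^ (q ^ k)"
      unfolding aw power_mult_distrib vi by (simp add: mult_ac)
  qed
  also have "\<dots> = (\<Sum>i<?n. \<Sum>k<m. v i * (\<beta> * \<alpha> ^ (i * w)) ^ (q ^ k))" by (rule sum.swap)
  also have "\<dots> = (\<Sum>i<?n. v i * tv \<beta> w i)"
    by (intro sum.cong refl) (simp add: tvi Tr_def sum_distrib_left)
  finally show ?thesis by simp
qed

lemma poly_tv:
  "poly (vec_poly (q ^ m - 1) (tv \<beta> w)) (\<alpha> ^ s) =
     of_nat (q ^ m - 1) * (\<Sum>k\<in>{k\<in>{..<m}. (q ^ m - 1) dvd (w * q ^ k + s)}. \<beta> ^ (q ^ k))"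
proof -
  let ?n = "q ^ m - 1"
  have "poly (vec_poly ?n (tv \<beta> w)) (\<alpha> ^ s) = (\<Sum>i<?n. tv \<beta> w i * (\<alpha> ^ s) ^ i)" by (rule poly_vec)
  also have "\<dots> = (\<Sum>i<?n. \<Sum>k<m. (\<beta> * \<alpha> ^ (i * w)) ^ (q ^ k) * \<alpha> ^ (i * s))"
    by (intro sum.cong refl) (simp add: tvi Tr_def sum_distrib_right sum_distrib_left power_mult[symmetric] mult.commute)
  also have "\<dots> = (\<Sum>i<?n. \<Sum>k<m. \<beta> ^ (q ^ k) * \<alpha> ^ (i * (w * q ^ k + s)))"
  proof (intro sum.cong refl)
    fix i k
    have "\<alpha> ^ (i * (w * q ^ k + s)) = (\<alpha> ^ (i * w)) ^ (q ^ k) * \<alpha> ^ (i * s)"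
      by (simp add: power_add power_mult distrib_left mult.assoc)
    thus "(\<beta> * \<alpha> ^ (i * w)) ^ (q ^ k) * \<alpha> ^ (i * s) = \<beta> ^ (q ^ k) * \<alpha> ^ (i * (w * q ^ k + s))"
      by (simp add: power_mult_distrib mult.assoc)
  qed
  also have "\<dots> = (\<Sum>k<m. \<Sum>i<?n. \<beta> ^ (q ^ k) * \<alpha> ^ (i * (w * q ^ k + s)))" by (rule sum.swap)
  also have "\<dots> = (\<Sum>k<m. \<beta> ^ (q ^ k) * (if ?n dvd (w * q ^ k + s) then of_nat ?n else 0))"
    by (intro sum.cong refl) (simp only: sum_distrib_left[symmetric] Gsum)
  also have "\<dots> = (\<Sum>k<m. if ?n dvd (w * q ^ k + s) then of_nat ?n * \<beta> ^ (q ^ k) else 0)"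
    by (intro sum.cong refl) simp
  also have "\<dots> = (\<Sum>k\<in>{k\<in>{..<m}. ?n dvd (w * q ^ k + s)}. of_nat ?n * \<beta> ^ (q ^ k))"
    by (rule sum.inter_filter[symmetric]) simp
  also have "\<dots> = of_nat ?n * (\<Sum>k\<in>{k\<in>{..<m}. ?n dvd (w * q ^ k + s)}. \<beta> ^ (q ^ k))"
    by (simp add: sum_distrib_left)
  finally show ?thesis .
qed

lemma Zfin: "finite (bch_defset q m \<delta>)"
  using defset_sub[OF q2 m1] finite_subset by blast

lemma Zsub: "bch_defset q m \<delta> \<subseteq> {..<q ^ m - 1}"
  using defset_sub[OF q2 m1] .

lemma gen_root:
  assumes "s \<in> bch_defset q m \<delta>"
  shows "poly (bch_gen_poly \<alpha> q m \<delta>) (\<alpha> ^ s) = 0"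
proof -
  have "poly (bch_gen_poly \<alpha> q m \<delta>) (\<alpha> ^ s) = (\<Prod>z\<in>bch_defset q m \<delta>. \<alpha> ^ s - \<alpha> ^ z)"
    unfolding bch_gen_poly_def by (simp add: poly_prod)
  also have "\<dots> = 0" using assms Zfin by (intro prod_zero[OF Zfin] bexI[of _ s]) simp_all
  finally show ?thesis .
qed

lemma dvd_root:
  assumes "bch_gen_poly \<alpha> q m \<delta> dvd p" "s \<in> bch_defset q m \<delta>"
  shows "poly p (\<alpha> ^ s) = 0"
proof -
  obtain r where "p = bch_gen_poly \<alpha> q m \<delta> * r" using assms(1) by (elim dvdE)
  thus ?thesis using gen_root[OF assms(2)] by simp
qed

lemma prod_dvd:
  assumes "finite S" "S \<subseteq> {..<q ^ m - 1}" "\<forall>z\<in>S. poly p (\<alpha> ^ z) = 0"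
  shows "(\<Prod>z\<in>S. [:- (\<alpha> ^ z), 1:]) dvd p"
  using assms
proof (induction S rule: finite_induct)
  case empty thus ?case by simp
next
  case (insert a S)
  have "(\<Prod>z\<in>S. [:- (\<alpha> ^ z), 1:]) dvd p" using insert by simp
  then obtain r where pr: "p = (\<Prod>z\<in>S. [:- (\<alpha> ^ z), 1:]) * r" by (elim dvdE)
  have "poly (\<Prod>z\<in>S. [:- (\<alpha> ^ z), 1:]) (\<alpha> ^ a) = (\<Prod>z\<in>S. poly [:- (\<alpha> ^ z), 1:] (\<alpha> ^ a))"
    by (rule poly_prod)
  also have "\<dots> = (\<Prod>z\<in>S. \<alpha> ^ a - \<alpha> ^ z)"
    by (intro prod.cong refl) simp
  also have "\<dots> \<noteq> 0"
  proof
    assume P0: "(\<Prod>z\<in>S. \<alpha> ^ a - \<alpha> ^ z) = 0"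
    have "\<exists>z\<in>S. \<alpha> ^ a - \<alpha> ^ z = 0" using P0 by (simp only: prod_zero_iff[OF insert(1)])
    then obtain z where z: "z \<in> S" "\<alpha> ^ a - \<alpha> ^ z = 0" by (elim bexE)
    hence "\<alpha> ^ a = \<alpha> ^ z" by simp
    moreover have "a \<in> {..<q ^ m - 1}" "z \<in> {..<q ^ m - 1}" using insert(4) z(1) by auto
    ultimately have "a = z" using alpha_inj by (simp add: inj_on_def)
    thus False using z(1) insert(2) by simp
  qed
  finally have nz: "poly (\<Prod>z\<in>S. [:- (\<alpha> ^ z), 1:]) (\<alpha> ^ a) \<noteq> 0" .
  have "poly p (\<alpha> ^ a) = 0" using insert(5) by simp
  hence "poly r (\<alpha> ^ a) = 0" using nz pr by simp
  hence d1: "[:- (\<alpha> ^ a), 1:] dvd r" by (simp add: poly_eq_0_iff_dvd)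
  have "[:- (\<alpha> ^ a), 1:] * (\<Prod>z\<in>S. [:- (\<alpha> ^ z), 1:]) dvd r * (\<Prod>z\<in>S. [:- (\<alpha> ^ z), 1:])"
    by (rule mult_dvd_mono[OF d1 dvd_refl])
  thus ?case using insert(1,2) pr by (simp add: mult.commute)
qed

lemma code_iff:
  "v \<in> bch_code \<alpha> q m \<delta> \<longleftrightarrow>
     v \<in> vecs q (q ^ m - 1) \<and> (\<forall>s\<in>bch_defset q m \<delta>. poly (vec_poly (q ^ m - 1) v) (\<alpha> ^ s) = 0)"
proof
  assume "v \<in> bch_code \<alpha> q m \<delta>"
  thus "v \<in> vecs q (q ^ m - 1) \<and> (\<forall>s\<in>bch_defset q m \<delta>. poly (vec_poly (q ^ m - 1) v) (\<alpha> ^ s) = 0)"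
    unfolding bch_code_def using dvd_root by blast
next
  assume h: "v \<in> vecs q (q ^ m - 1) \<and> (\<forall>s\<in>bch_defset q m \<delta>. poly (vec_poly (q ^ m - 1) v) (\<alpha> ^ s) = 0)"
  have "bch_gen_poly \<alpha> q m \<delta> dvd vec_poly (q ^ m - 1) v"
    unfolding bch_gen_poly_def using h Zfin Zsub by (intro prod_dvd) auto
  thus "v \<in> bch_code \<alpha> q m \<delta>" using h unfolding bch_code_def by blast
qed

theorem dual_iff:
  "dual_code q (q ^ m - 1) (bch_code \<alpha> q m \<delta>) \<subseteq> bch_code \<alpha> q m \<delta> \<longleftrightarrow>
     \<not> (\<exists>z\<in>bch_defset q m \<delta>. \<exists>s\<in>bch_defset q m \<delta>. (q ^ m - 1) dvd (z + s))"
proof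
  let ?n = "q ^ m - 1"
  let ?Z = "bch_defset q m \<delta>"
  assume sub: "dual_code q ?n (bch_code \<alpha> q m \<delta>) \<subseteq> bch_code \<alpha> q m \<delta>"
  show "\<not> (\<exists>z\<in>?Z. \<exists>s\<in>?Z. ?n dvd (z + s))"
  proof
    assume "\<exists>z\<in>?Z. \<exists>s\<in>?Z. ?n dvd (z + s)"
    then obtain z s where zs: "z \<in> ?Z" "s \<in> ?Z" "?n dvd (z + s)" by blast
    define K where "K = {k\<in>{..<m}. ?n dvd (z * q ^ k + s)}"
    have K1: "K \<subseteq> {..<m}" unfolding K_def by blast
    have K2: "0 \<in> K" unfolding K_def using zs(3) m1 by simp
    obtain \<beta> :: 'b where b: "(\<Sum>k\<in>K. \<beta> ^ (q ^ k)) \<noteq> 0" using exists_nonroot[OF K1 K2] by blast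
    have "tv \<beta> z \<in> dual_code q ?n (bch_code \<alpha> q m \<delta>)"
      unfolding dual_code_def
    proof (intro CollectI conjI ballI)
      show "tv \<beta> z \<in> vecs q ?n" by (rule tv_vecs)
    next
      fix c assume c: "c \<in> bch_code \<alpha> q m \<delta>"
      hence cv: "c \<in> vecs q ?n" and c0: "poly (vec_poly ?n c) (\<alpha> ^ z) = 0"
        using code_iff zs(1) by blast+
      show "(\<Sum>i<?n. c i * tv \<beta> z i) = 0"
        unfolding inner_tv[OF cv] c0 by (simp add: Tr_0)
    qed
    hence "tv \<beta> z \<in> bch_code \<alpha> q m \<delta>" using sub by blast
    hence "poly (vec_poly ?n (tv \<beta> z)) (\<alpha> ^ s) = 0" using code_iff zs(2) by blast
    moreover have "poly (vec_poly ?n (tv \<beta> z)) (\<alpha> ^ s) = - (\<Sum>k\<in>K. \<beta> ^ (q ^ k))"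
      unfolding poly_tv ofn K_def by simp
    ultimately show False using b by simp
  qed
next
  let ?n = "q ^ m - 1"
  let ?Z = "bch_defset q m \<delta>"
  assume nb: "\<not> (\<exists>z\<in>?Z. \<exists>s\<in>?Z. ?n dvd (z + s))"
  show "dual_code q ?n (bch_code \<alpha> q m \<delta>) \<subseteq> bch_code \<alpha> q m \<delta>"
  proof
    fix y assume y: "y \<in> dual_code q ?n (bch_code \<alpha> q m \<delta>)"
    hence yv: "y \<in> vecs q ?n" and orth: "\<forall>x\<in>bch_code \<alpha> q m \<delta>. (\<Sum>i<?n. x i * y i) = 0"
      unfolding dual_code_def by auto
    have "poly (vec_poly ?n y) (\<alpha> ^ w) = 0" if w: "w \<in> ?Z" for w
    proof (rule ccontr)
      assume Y: "poly (vec_poly ?n y) (\<alpha> ^ w) \<noteq> 0"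
      have inC: "tv \<beta> w \<in> bch_code \<alpha> q m \<delta>" for \<beta>
        unfolding code_iff
      proof (intro conjI ballI)
        show "tv \<beta> w \<in> vecs q ?n" by (rule tv_vecs)
      next
        fix s assume s: "s \<in> ?Z"
        have "{k\<in>{..<m}. ?n dvd (w * q ^ k + s)} = {}"
        proof (rule ccontr)
          assume "{k\<in>{..<m}. ?n dvd (w * q ^ k + s)} \<noteq> {}"
          then obtain k where k: "?n dvd (w * q ^ k + s)" by blast
          have z': "w * q ^ k mod ?n \<in> ?Z" by (rule defset_closed[OF q2 w])
          have "[w * q ^ k mod ?n + s = w * q ^ k + s] (mod ?n)"
            unfolding cong_def by (simp add: mod_add_left_eq)
          hence "?n dvd (w * q ^ k mod ?n + s) \<longleftrightarrow> ?n dvd (w * q ^ k + s)" by (rule cong_dvd_iff)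
          hence "?n dvd (w * q ^ k mod ?n + s)" using k by (rule iffD2)
          thus False using nb z' s by blast
        qed
        hence E: "{k\<in>{..<m}. ?n dvd (w * q ^ k + s)} = {}" .
        show "poly (vec_poly ?n (tv \<beta> w)) (\<alpha> ^ s) = 0" unfolding poly_tv
          by (simp only: E sum.empty mult_zero_right)
      qed
      have tr0: "Tr (\<beta> * poly (vec_poly ?n y) (\<alpha> ^ w)) = 0" for \<beta>
      proof -
        have "(\<Sum>i<?n. tv \<beta> w i * y i) = 0" using orth inC by blast
        hence "(\<Sum>i<?n. y i * tv \<beta> w i) = 0" by (simp add: mult.commute)
        thus ?thesis unfolding inner_tv[OF yv] .
      qed
      obtain \<gamma> where g: "Tr \<gamma> \<noteq> 0" using Tr_nonzero by blast
      have "Tr ((\<gamma> / poly (vec_poly ?n y) (\<alpha> ^ w)) * poly (vec_poly ?n y) (\<alpha> ^ w)) = 0" by (rule tr0)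
      thus False using g Y by simp
    qed
    thus "y \<in> bch_code \<alpha> q m \<delta>" unfolding code_iff using yv by blast
  qed
qed

end


theorem mainTheorem1:
  fixes \<alpha> :: "'b::{field,finite}" and q m \<delta> :: nat
  assumes "prime_power q" and "m \<ge> 2" and "card (UNIV :: 'b set) = q ^ m"
    and "primitive_elem \<alpha>"
    and "2 \<le> \<delta>" and "\<delta> \<le> q ^ m - 1"
  shows "dual_code q (q ^ m - 1) (bch_code \<alpha> q m \<delta>) \<subseteq> bch_code \<alpha> q m \<delta>
    \<longleftrightarrow> \<delta> \<le> q ^ ((m + 1) div 2) - 1 - (q - 2) * iverson (odd m)"
proof -
  have m1: "1 \<le> m" using assms(2) by simp
  interpret bchf \<alpha> q m
    by (unfold_locales) (use assms(1,3,4) m1 in auto)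
  have "dual_code q (q ^ m - 1) (bch_code \<alpha> q m \<delta>) \<subseteq> bch_code \<alpha> q m \<delta> \<longleftrightarrow>
     \<not> (\<exists>z\<in>bch_defset q m \<delta>. \<exists>s\<in>bch_defset q m \<delta>. (q ^ m - 1) dvd (z + s))"
    by (rule dual_iff)
  also have "\<dots> \<longleftrightarrow> \<not> coll q m \<delta>"
    using bad_iff_coll[OF q2 m1 assms(6)] by simp
  also have "\<dots> \<longleftrightarrow> \<delta> \<le> q ^ ((m + 1) div 2) - 1 - (q - 2) * iverson (odd m)"
    by (rule nt_main[OF q2 assms(2) assms(5)])
  finally show ?thesis .
qed

end
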